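(* Let a discrete mean-field game be given (setting in the context) and fix $\epsilon>0$. (CCE version) Run MF-PSRO(CCE): start with $\Pi_1=\{\pi_1\}$, $\pi_1\in\Pi$. At each iteration $n$, let $\rho_n$ be a finitely supported distribution over $\Delta(\Pi_n)$ that is a restricted $\epsilon$-MFCCE for $\Pi_n$ (as obtained from a no-external-regret learner run until its average regret is at most $\epsilon$); pick $\pi^{new}\in\arg\max_{\pi\in\Pi}\sum_\nu\rho_n(\nu)J(\pi,\mu(\nu))$, set $\Pi_{n+1}=\Pi_n\cup\{\pi^{new}\}$, and terminate if $\Pi_{n+1}=\Pi_n$. Then the algorithm terminates after finitely many iterations and the final $\rho_n$ is an $\epsilon$-MFCCE of the full game. (CE version) Run MF-PSRO(CE): same, except that $\rho_n$ is a restricted $\epsilon$-MFCE for $\Pi_n$ (as obtained from a no-internal-regret learner with average regret at most $\epsilon$), and $\Pi_{n+1}=\Pi_n\cup\{\pi^{new}(\pi_k):\pi_k\in\Pi_n,\ \rho_n(\pi_k)>0\}$ where $\pi^{new}(\pi_k)\in\arg\max_{\pi\in\Pi}\sum_\nu\rho_n(\nu\mid\pi_k)J(\pi,\mu(\nu))$. Then the algorithm terminates after finitely many iterations and the final $\rho_n$ is an $\epsilon$-MFCE of the full game.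
   Context: A discrete mean-field game consists of a finite state set $\mathcal X$, a finite action set $\mathcal A$, a reward $r:\mathcal X\times\mathcal A\times\Delta(\mathcal X)\to\mathbb R$, transition probabilities $p(x'\mid x,a)$ not depending on the population distribution, and an initial distribution $\mu_0$. A policy is $\pi:\mathcal X\to\Delta(\mathcal A)$; $\Pi$ is the finite set of deterministic policies; $\mu^\pi$ is the state occupancy measure of $\pi$ (discounted or finite-horizon); $J(\pi,\mu)=\sum_{x,a}\mu^\pi(x)\pi(x,a)r(x,a,\mu)$. For $\nu$ a distribution over a finite set of policies, $\mu(\nu)=\sum_\pi\nu(\pi)\mu^\pi$ and $\pi(\nu)$ is the policy sampling a policy from $\nu$ at the start and playing it throughout, so $J(\pi(\nu),\mu)=\sum_\pi\nu(\pi)J(\pi,\mu)$. For a finitely supported correlation device $\rho$ over $\Delta(\Pi_n)$: $\rho(\pi)=\sum_\nu\nu(\pi)\rho(\nu)$ and $\rho(\nu\mid\pi)=\nu(\pi)\rho(\nu)/\sum_{\nu'}\nu'(\pi)\rho(\nu')$. $\rho$ is a restricted $\epsilon$-MFCCE for $\Pi_n$ if $\mathbb E_{\nu\sim\rho,\pi\sim\nu}[J(\pi',\mu(\nu))-J(\pi,\mu(\nu))]\le\epsilon$ for all $\pi'\in\Pi_n$, and an $\epsilon$-MFCCE of the full game if this holds for all $\pi'\in\Pi$. $\rho$ is a restricted $\epsilon$-MFCE for $\Pi_n$ if $\rho(\pi)\,\mathbb E_{\nu\sim\rho(\cdot\mid\pi)}[J(\pi',\mu(\nu))-J(\pi,\mu(\nu))]\le\epsilon$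 for all $\pi,\pi'\in\Pi_n$, and an $\epsilon$-MFCE of the full game if this holds for all $\pi\in\Pi_n$ and all $\pi'\in\Pi$ (recommendations $\pi$ lie in the support, which is inside $\Pi_n$). *)

theory Defs
  imports "HOL-Probability.Probability_Mass_Function"
begin

record ('x, 'a) mfg =
  trans  :: "'x \<Rightarrow> 'a \<Rightarrow> 'x \<Rightarrow> real"          (* trans G x a x' = p(x' | x, a) *)
  init   :: "'x \<Rightarrow> real"
  rew    :: "'x \<Rightarrow> 'a \<Rightarrow> ('x \<Rightarrow> real) \<Rightarrow> real"
  weight :: "nat \<Rightarrow> real"                         (* time weights defining the occupancy measure *)

definition is_dist :: "('b::finite \<Rightarrow> real) \<Rightarrow> bool" where
  "is_dist d \<longleftrightarrow> (\<forall>y. 0 \<le> d y) \<and> (\<Sum>y\<in>UNIV. d y) = 1"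

definition mfg_valid :: "('x::finite, 'a::finite) mfg \<Rightarrow> bool" where
  "mfg_valid G \<longleftrightarrow>
     (\<forall>x a. is_dist (trans G x a)) \<and> is_dist (init G) \<and>
     ((\<exists>\<gamma>::real. 0 \<le> \<gamma> \<and> \<gamma> < 1 \<and> weight G = (\<lambda>t. (1 - \<gamma>) * \<gamma> ^ t)) \<or>
      (\<exists>H::nat. 0 < H \<and> weight G = (\<lambda>t. if t < H then 1 / real H else 0)))"

(* stochastic policy: pol x a = pi(x, a); deterministic policy 'x \<Rightarrow> 'a embedded *)
definition det_pol :: "('x \<Rightarrow> 'a) \<Rightarrow> 'x \<Rightarrow> 'a \<Rightarrow> real" where
  "det_pol \<pi> x a = (if \<pi> x = a then 1 else 0)"

fun state_dist :: "('x::finite, 'a::finite) mfg \<Rightarrow> ('x \<Rightarrow> 'a \<Rightarrow> real) \<Rightarrow> nat \<Rightarrow> 'x \<Rightarrow> real" where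
  "state_dist G pol 0 = init G"
| "state_dist G pol (Suc t) =
     (\<lambda>x'. \<Sum>x\<in>UNIV. \<Sum>a\<in>UNIV. state_dist G pol t x * pol x a * trans G x a x')"

definition occ :: "('x::finite, 'a::finite) mfg \<Rightarrow> ('x \<Rightarrow> 'a \<Rightarrow> real) \<Rightarrow> 'x \<Rightarrow> real" where
  "occ G pol x = (\<Sum>t. weight G t * state_dist G pol t x)"

definition J :: "('x::finite, 'a::finite) mfg \<Rightarrow> ('x \<Rightarrow> 'a \<Rightarrow> real) \<Rightarrow> ('x \<Rightarrow> real) \<Rightarrow> real" where
  "J G pol \<mu> = (\<Sum>x\<in>UNIV. \<Sum>a\<in>UNIV. occ G pol x * pol x a * rew G x a \<mu>)"

definition Jd :: "('x::finite, 'a::finite) mfg \<Rightarrow> ('x \<Rightarrow> 'a) \<Rightarrow> ('x \<Rightarrow> real) \<Rightarrow> real" where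
  "Jd G \<pi> \<mu> = J G (det_pol \<pi>) \<mu>"

definition mu_of :: "('x::finite, 'a::finite) mfg \<Rightarrow> ('x \<Rightarrow> 'a) pmf \<Rightarrow> 'x \<Rightarrow> real" where
  "mu_of G \<nu> = (\<lambda>x. \<Sum>\<pi>\<in>UNIV. pmf \<nu> \<pi> * occ G (det_pol \<pi>) x)"

definition device_over :: "('x \<Rightarrow> 'a) set \<Rightarrow> ('x \<Rightarrow> 'a) pmf pmf \<Rightarrow> bool" where
  "device_over S \<rho> \<longleftrightarrow> finite (set_pmf \<rho>) \<and> (\<forall>\<nu>\<in>set_pmf \<rho>. set_pmf \<nu> \<subseteq> S)"

definition rho_pol :: "('x \<Rightarrow> 'a) pmf pmf \<Rightarrow> ('x \<Rightarrow> 'a) \<Rightarrow> real" where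
  "rho_pol \<rho> \<pi> = (\<Sum>\<nu>\<in>set_pmf \<rho>. pmf \<nu> \<pi> * pmf \<rho> \<nu>)"

definition rho_cond :: "('x \<Rightarrow> 'a) pmf pmf \<Rightarrow> ('x \<Rightarrow> 'a) pmf \<Rightarrow> ('x \<Rightarrow> 'a) \<Rightarrow> real" where
  "rho_cond \<rho> \<nu> \<pi> = pmf \<nu> \<pi> * pmf \<rho> \<nu> / rho_pol \<rho> \<pi>"

definition cce_gap :: "('x::finite, 'a::finite) mfg \<Rightarrow> ('x \<Rightarrow> 'a) pmf pmf \<Rightarrow> ('x \<Rightarrow> 'a) \<Rightarrow> real" where
  "cce_gap G \<rho> \<pi>' = (\<Sum>\<nu>\<in>set_pmf \<rho>. pmf \<rho> \<nu> *
      (\<Sum>\<pi>\<in>UNIV. pmf \<nu> \<pi> * (Jd G \<pi>' (mu_of G \<nu>) - Jd G \<pi> (mu_of G \<nu>))))"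

definition ce_gap :: "('x::finite, 'a::finite) mfg \<Rightarrow> ('x \<Rightarrow> 'a) pmf pmf \<Rightarrow> ('x \<Rightarrow> 'a) \<Rightarrow> ('x \<Rightarrow> 'a) \<Rightarrow> real" where
  "ce_gap G \<rho> \<pi> \<pi>' = rho_pol \<rho> \<pi> *
      (\<Sum>\<nu>\<in>set_pmf \<rho>. rho_cond \<rho> \<nu> \<pi> * (Jd G \<pi>' (mu_of G \<nu>) - Jd G \<pi> (mu_of G \<nu>)))"

definition restricted_mfcce :: "('x::finite, 'a::finite) mfg \<Rightarrow> real \<Rightarrow> ('x \<Rightarrow> 'a) set \<Rightarrow> ('x \<Rightarrow> 'a) pmf pmf \<Rightarrow> bool" where
  "restricted_mfcce G \<epsilon> S \<rho> \<longleftrightarrow> device_over S \<rho> \<and> (\<forall>\<pi>'\<in>S. cce_gap G \<rho> \<pi>' \<le> \<epsilon>)"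

(* epsilon-MFCCE of the full game: deviations to all deterministic policies (Pi = UNIV) *)
definition mfcce :: "('x::finite, 'a::finite) mfg \<Rightarrow> real \<Rightarrow> ('x \<Rightarrow> 'a) pmf pmf \<Rightarrow> bool" where
  "mfcce G \<epsilon> \<rho> \<longleftrightarrow> (\<forall>\<pi>'. cce_gap G \<rho> \<pi>' \<le> \<epsilon>)"

definition restricted_mfce :: "('x::finite, 'a::finite) mfg \<Rightarrow> real \<Rightarrow> ('x \<Rightarrow> 'a) set \<Rightarrow> ('x \<Rightarrow> 'a) pmf pmf \<Rightarrow> bool" where
  "restricted_mfce G \<epsilon> S \<rho> \<longleftrightarrow> device_over S \<rho> \<and> (\<forall>\<pi>\<in>S. \<forall>\<pi>'\<in>S. ce_gap G \<rho> \<pi> \<pi>' \<le> \<epsilon>)"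

(* epsilon-MFCE of the full game: recommendations pi in S (containing the support), deviations in Pi = UNIV *)
definition mfce :: "('x::finite, 'a::finite) mfg \<Rightarrow> real \<Rightarrow> ('x \<Rightarrow> 'a) set \<Rightarrow> ('x \<Rightarrow> 'a) pmf pmf \<Rightarrow> bool" where
  "mfce G \<epsilon> S \<rho> \<longleftrightarrow> (\<forall>\<pi>\<in>S. \<forall>\<pi>'. ce_gap G \<rho> \<pi> \<pi>' \<le> \<epsilon>)"

definition running :: "(nat \<Rightarrow> ('x \<Rightarrow> 'a) set) \<Rightarrow> nat \<Rightarrow> bool" where
  "running Pis n \<longleftrightarrow> (\<forall>m. 1 \<le> m \<and> m < n \<longrightarrow> Pis (Suc m) \<noteq> Pis m)"

(* A run of MF-PSRO(CCE): Pis n = Pi_n, rhos n = rho_n, newp n = pi^new at iteration n.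
   Iteration n is only executed if the algorithm has not terminated before. *)
definition psro_cce_run :: "('x::finite, 'a::finite) mfg \<Rightarrow> real \<Rightarrow> ('x \<Rightarrow> 'a) \<Rightarrow>
    (nat \<Rightarrow> ('x \<Rightarrow> 'a) set) \<Rightarrow> (nat \<Rightarrow> ('x \<Rightarrow> 'a) pmf pmf) \<Rightarrow> (nat \<Rightarrow> ('x \<Rightarrow> 'a)) \<Rightarrow> bool" where
  "psro_cce_run G \<epsilon> \<pi>1 Pis rhos newp \<longleftrightarrow>
     Pis 1 = {\<pi>1} \<and>
     (\<forall>n\<ge>1. running Pis n \<longrightarrow>
        restricted_mfcce G \<epsilon> (Pis n) (rhos n) \<and>
        (\<forall>\<pi>. (\<Sum>\<nu>\<in>set_pmf (rhos n). pmf (rhos n) \<nu> * Jd G \<pi> (mu_of G \<nu>))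
              \<le> (\<Sum>\<nu>\<in>set_pmf (rhos n). pmf (rhos n) \<nu> * Jd G (newp n) (mu_of G \<nu>))) \<and>
        Pis (Suc n) = Pis n \<union> {newp n})"

definition psro_ce_run :: "('x::finite, 'a::finite) mfg \<Rightarrow> real \<Rightarrow> ('x \<Rightarrow> 'a) \<Rightarrow>
    (nat \<Rightarrow> ('x \<Rightarrow> 'a) set) \<Rightarrow> (nat \<Rightarrow> ('x \<Rightarrow> 'a) pmf pmf) \<Rightarrow> (nat \<Rightarrow> ('x \<Rightarrow> 'a) \<Rightarrow> ('x \<Rightarrow> 'a)) \<Rightarrow> bool" where
  "psro_ce_run G \<epsilon> \<pi>1 Pis rhos newp \<longleftrightarrow>
     Pis 1 = {\<pi>1} \<and>
     (\<forall>n\<ge>1. running Pis n \<longrightarrow>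
        restricted_mfce G \<epsilon> (Pis n) (rhos n) \<and>
        (\<forall>pk\<in>Pis n. rho_pol (rhos n) pk > 0 \<longrightarrow>
           (\<forall>\<pi>. (\<Sum>\<nu>\<in>set_pmf (rhos n). rho_cond (rhos n) \<nu> pk * Jd G \<pi> (mu_of G \<nu>))
                 \<le> (\<Sum>\<nu>\<in>set_pmf (rhos n). rho_cond (rhos n) \<nu> pk * Jd G (newp n pk) (mu_of G \<nu>)))) \<and>
        Pis (Suc n) = Pis n \<union> {newp n pk | pk. pk \<in> Pis n \<and> rho_pol (rhos n) pk > 0})"

end

theory Submission
  imports Defs
begin

lemma psro_terminates:
  fixes Pis :: "nat \<Rightarrow> ('b::finite \<Rightarrow> 'c::finite) set"
  assumes mono: "\<And>n. n \<ge> 1 \<Longrightarrow> running Pis n \<Longrightarrow> Pis n \<subseteq> Pis (Suc n)"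
  shows "\<exists>n\<ge>1. running Pis n \<and> Pis (Suc n) = Pis n"
proof (rule ccontr)
  assume C: "\<not> ?thesis"
  have R: "running Pis n" for n
  proof (induction n)
    case 0 then show ?case by (simp add: running_def)
  next
    case (Suc n)
    show ?case
    proof (cases "n \<ge> 1")
      case True
      then have "Pis (Suc n) \<noteq> Pis n" using C Suc by blast
      then show ?thesis using Suc unfolding running_def
        by (metis less_Suc_eq)
    next
      case False
      then show ?thesis unfolding running_def by auto
    qed
  qed
  have G: "card (Pis (Suc n)) \<ge> n" for n
  proof (induction n)
    case 0 then show ?case by simp
  next
    case (Suc n)
    have ne: "Pis (Suc (Suc n)) \<noteq> Pis (Suc n)" using C R by auto
    have "Pis (Suc n) \<subseteq> Pis (Suc (Suc n))" using mono R by auto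
    then have "Pis (Suc n) \<subset> Pis (Suc (Suc n))" using ne by auto
    then have "card (Pis (Suc n)) < card (Pis (Suc (Suc n)))"
      by (simp add: psubset_card_mono)
    then show ?case using Suc by simp
  qed
  have "card (Pis (Suc (Suc (card (UNIV::('b \<Rightarrow> 'c) set))))) \<le> card (UNIV::('b \<Rightarrow> 'c) set)"
    by (simp add: card_mono)
  with G[of "Suc (card (UNIV::('b \<Rightarrow> 'c) set))"] show False by simp
qed

lemma sum_pmf_univ: "(\<Sum>\<pi>\<in>(UNIV::('b::finite) set). pmf \<nu> \<pi>) = 1"
  by (simp add: sum_pmf_eq_1)

lemma cce_gap_eq:
  "cce_gap G \<rho> \<pi>' = (\<Sum>\<nu>\<in>set_pmf \<rho>. pmf \<rho> \<nu> * Jd G \<pi>' (mu_of G \<nu>))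
     - (\<Sum>\<nu>\<in>set_pmf \<rho>. pmf \<rho> \<nu> * (\<Sum>\<pi>\<in>UNIV. pmf \<nu> \<pi> * Jd G \<pi> (mu_of G \<nu>)))"
proof -
  have "\<And>\<nu>. (\<Sum>\<pi>\<in>UNIV. pmf \<nu> \<pi> * (Jd G \<pi>' (mu_of G \<nu>) - Jd G \<pi> (mu_of G \<nu>)))
     = Jd G \<pi>' (mu_of G \<nu>) - (\<Sum>\<pi>\<in>UNIV. pmf \<nu> \<pi> * Jd G \<pi> (mu_of G \<nu>))"
    by (simp add: right_diff_distrib sum_subtractf sum_pmf_univ flip: sum_distrib_right)
  then show ?thesis unfolding cce_gap_def
    by (simp add: right_diff_distrib sum_subtractf)
qed

lemma ce_gap_eq:
  "ce_gap G \<rho> \<pi> \<pi>' = rho_pol \<rho> \<pi> * ((\<Sum>\<nu>\<in>set_pmf \<rho>. rho_cond \<rho> \<nu> \<pi> * Jd G \<pi>' (mu_of G \<nu>))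
     - (\<Sum>\<nu>\<in>set_pmf \<rho>. rho_cond \<rho> \<nu> \<pi> * Jd G \<pi> (mu_of G \<nu>)))"
  unfolding ce_gap_def by (simp add: right_diff_distrib sum_subtractf)

lemma rho_pol_nonneg: "rho_pol \<rho> \<pi> \<ge> 0"
  unfolding rho_pol_def by (intro sum_nonneg) simp

theorem mainTheorem5:
  fixes G :: "('x::finite, 'a::finite) mfg" and \<epsilon> :: real and \<pi>1 :: "'x \<Rightarrow> 'a"
  assumes "mfg_valid G" and "\<epsilon> > 0"
  shows
    "(\<forall>Pis rhos newp. psro_cce_run G \<epsilon> \<pi>1 Pis rhos newp \<longrightarrow>
        (\<exists>n\<ge>1. running Pis n \<and> Pis (Suc n) = Pis n \<and> mfcce G \<epsilon> (rhos n))) \<and>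
     (\<forall>Pis rhos newp. psro_ce_run G \<epsilon> \<pi>1 Pis rhos newp \<longrightarrow>
        (\<exists>n\<ge>1. running Pis n \<and> Pis (Suc n) = Pis n \<and> mfce G \<epsilon> (Pis n) (rhos n)))"
proof (intro conjI allI impI)
  fix Pis rhos newp
  assume run: "psro_cce_run G \<epsilon> \<pi>1 Pis rhos newp"
  have "\<exists>n\<ge>1. running Pis n \<and> Pis (Suc n) = Pis n"
    by (rule psro_terminates) (use run in \<open>auto simp: psro_cce_run_def\<close>)
  then obtain n where n: "n \<ge> 1" "running Pis n" "Pis (Suc n) = Pis n" by blast
  have step: "restricted_mfcce G \<epsilon> (Pis n) (rhos n)"
    "\<And>\<pi>. (\<Sum>\<nu>\<in>set_pmf (rhos n). pmf (rhos n) \<nu> * Jd G \<pi> (mu_of G \<nu>))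
              \<le> (\<Sum>\<nu>\<in>set_pmf (rhos n). pmf (rhos n) \<nu> * Jd G (newp n) (mu_of G \<nu>))"
    "Pis (Suc n) = Pis n \<union> {newp n}"
    using run n unfolding psro_cce_run_def by blast+
  have inP: "newp n \<in> Pis n" using step(3) n(3) by auto
  have gn: "cce_gap G (rhos n) (newp n) \<le> \<epsilon>" using step(1) inP
    unfolding restricted_mfcce_def by blast
  have "mfcce G \<epsilon> (rhos n)"
    unfolding mfcce_def
  proof
    fix \<pi>'
    show "cce_gap G (rhos n) \<pi>' \<le> \<epsilon>"
      using gn step(2)[of \<pi>'] by (simp add: cce_gap_eq)
  qed
  then show "\<exists>n\<ge>1. running Pis n \<and> Pis (Suc n) = Pis n \<and> mfcce G \<epsilon> (rhos n)"
    using n by blast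
next
  fix Pis rhos newp
  assume run: "psro_ce_run G \<epsilon> \<pi>1 Pis rhos newp"
  have "\<exists>n\<ge>1. running Pis n \<and> Pis (Suc n) = Pis n"
    by (rule psro_terminates) (use run in \<open>auto simp: psro_ce_run_def\<close>)
  then obtain n where n: "n \<ge> 1" "running Pis n" "Pis (Suc n) = Pis n" by blast
  have step: "restricted_mfce G \<epsilon> (Pis n) (rhos n)"
    "\<forall>pk\<in>Pis n. rho_pol (rhos n) pk > 0 \<longrightarrow>
           (\<forall>\<pi>. (\<Sum>\<nu>\<in>set_pmf (rhos n). rho_cond (rhos n) \<nu> pk * Jd G \<pi> (mu_of G \<nu>))
                 \<le> (\<Sum>\<nu>\<in>set_pmf (rhos n). rho_cond (rhos n) \<nu> pk * Jd G (newp n pk) (mu_of G \<nu>)))"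
    "Pis (Suc n) = Pis n \<union> {newp n pk | pk. pk \<in> Pis n \<and> rho_pol (rhos n) pk > 0}"
    using run n unfolding psro_ce_run_def by blast+
  have "mfce G \<epsilon> (Pis n) (rhos n)"
    unfolding mfce_def
  proof (intro ballI allI)
    fix \<pi> \<pi>'
    assume p: "\<pi> \<in> Pis n"
    show "ce_gap G (rhos n) \<pi> \<pi>' \<le> \<epsilon>"
    proof (cases "rho_pol (rhos n) \<pi> > 0")
      case False
      then have "rho_pol (rhos n) \<pi> = 0" using rho_pol_nonneg[of "rhos n" \<pi>] by linarith
      then show ?thesis using assms(2) by (simp add: ce_gap_eq)
    next
      case True
      have inP: "newp n \<pi> \<in> Pis n" using step(3) n(3) p True by blast
      have gn: "ce_gap G (rhos n) \<pi> (newp n \<pi>) \<le> \<epsilon>" using step(1) inP p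
        unfolding restricted_mfce_def by blast
      have le: "(\<Sum>\<nu>\<in>set_pmf (rhos n). rho_cond (rhos n) \<nu> \<pi> * Jd G \<pi>' (mu_of G \<nu>))
                 \<le> (\<Sum>\<nu>\<in>set_pmf (rhos n). rho_cond (rhos n) \<nu> \<pi> * Jd G (newp n \<pi>) (mu_of G \<nu>))"
        using step(2) p True by blast
      have "ce_gap G (rhos n) \<pi> \<pi>' \<le> ce_gap G (rhos n) \<pi> (newp n \<pi>)"
        unfolding ce_gap_eq using True le by (intro mult_left_mono) auto
      then show ?thesis using gn by linarith
    qed
  qed
  then show "\<exists>n\<ge>1. running Pis n \<and> Pis (Suc n) = Pis n \<and> mfce G \<epsilon> (Pis n) (rhos n)"
    using n by blast
qed

end
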